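(* Let $m,n\in\mathbb{N}$, $T=\{1,\dots,m\}$, and let $\mathcal{F}:\mathbb{R}^{m\times n}\times\mathbb{R}^m\rightrightarrows\mathbb{R}^n$ be given by $\mathcal{F}(A,b)=\{x\in\mathbb{R}^n\mid Ax\le b\}$. Let $(\bar A,\bar b)$ satisfy $\mathcal{F}(\bar A,\bar b)\neq\emptyset$. Then $$\operatorname{Lipusc}\mathcal{F}(\bar A,\bar b)=\lim_{\delta\downarrow 0}\ \sup\left\{\frac{(\|x\|+1)\,\operatorname{dist}\big(x,\mathcal{F}(\bar A,\bar b)\big)}{\|(\bar Ax-\bar b)_+\|_\infty}\ \Bigg|\ x\in\mathbb{R}^n,\ \|(\bar Ax-\bar b)_+\|_\infty\le\delta(\|x\|+1)\right\},$$ where the limit exists in $[0,+\infty]$.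
   Context: $\mathbb{R}^n$ carries an arbitrary norm $\|\cdot\|$ with dual norm $\|u\|_*=\max_{\|x\|\le1}|u'x|$. $\mathbb{R}^m$ carries $\|b\|_\infty=\max_t|b_t|$. The parameter space $\mathbb{R}^{m\times n}\times\mathbb{R}^m$ carries the norm $\|(A,b)\|=\max_{t\in T}\max\{\|a_t\|_*,|b_t|\}$, where $a_t'$ is the $t$-th row of $A$. $(\bar Ax-\bar b)_+$ is the vector with components $\max\{\bar a_t'x-\bar b_t,0\}$. $\operatorname{dist}(x,\Omega)=\inf_{\omega\in\Omega}\|x-\omega\|$, with $\inf\emptyset=+\infty$; the convention $0/0:=0$ is used. For a set-valued map $\mathcal{M}:Y\rightrightarrows X$ between metric spaces and $\bar y$ with $\mathcal{M}(\bar y)\ne\emptyset$, the Lipschitz upper semicontinuity modulus $\operatorname{Lipusc}\mathcal{M}(\bar y)$ is the infimum of all $\kappa\ge0$ for which there is a neighborhood $V$ of $\bar y$ with $\operatorname{dist}(x,\mathcal{M}(\bar y))\le\kappa\operatorname{dist}(y,\bar y)$ for all $y\in V$ and all $x\in\mathcal{M}(y)$ (infimum of the empty set is $+\infty$). *)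

theory Defs
  imports "HOL-Analysis.Analysis"
begin

definition is_norm :: "(real^'n \<Rightarrow> real) \<Rightarrow> bool" where
  "is_norm N \<longleftrightarrow> (\<forall>x. N x = 0 \<longleftrightarrow> x = 0) \<and>
     (\<forall>c x. N (c *\<^sub>R x) = \<bar>c\<bar> * N x) \<and>
     (\<forall>x y. N (x + y) \<le> N x + N y)"

definition dual_norm :: "(real^'n \<Rightarrow> real) \<Rightarrow> real^'n \<Rightarrow> real" where
  "dual_norm N u = Sup {\<bar>u \<bullet> x\<bar> | x. N x \<le> 1}"

definition feas :: "real^'n^'m \<Rightarrow> real^'m \<Rightarrow> (real^'n) set" where
  "feas A b = {x. \<forall>t. A $ t \<bullet> x \<le> b $ t}"

text \<open>Distance to a set w.r.t. N, with inf of the empty set = +infinity.\<close>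
definition distN :: "(real^'n \<Rightarrow> real) \<Rightarrow> real^'n \<Rightarrow> (real^'n) set \<Rightarrow> ereal" where
  "distN N x \<Omega> = (INF w\<in>\<Omega>. ereal (N (x - w)))"

definition pnorm :: "(real^'n \<Rightarrow> real) \<Rightarrow> real^'n^'m \<Rightarrow> real^'m \<Rightarrow> real" where
  "pnorm N A b = Max (range (\<lambda>t. max (dual_norm N (A $ t)) \<bar>b $ t\<bar>))"

definition pdist :: "(real^'n \<Rightarrow> real) \<Rightarrow> ((real^'n^'m) \<times> (real^'m)) \<Rightarrow> ((real^'n^'m) \<times> (real^'m)) \<Rightarrow> real" where
  "pdist N p q = pnorm N (fst p - fst q) (snd p - snd q)"

definition Lipusc_feas :: "(real^'n \<Rightarrow> real) \<Rightarrow> real^'n^'m \<Rightarrow> real^'m \<Rightarrow> ereal" where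
  "Lipusc_feas N Abar bbar = Inf {ereal \<kappa> | \<kappa>. \<kappa> \<ge> 0 \<and>
      (\<exists>\<epsilon>>0. \<forall>A b. pdist N (A, b) (Abar, bbar) < \<epsilon> \<longrightarrow>
         (\<forall>x\<in>feas A b. distN N x (feas Abar bbar) \<le> ereal \<kappa> * ereal (pdist N (A, b) (Abar, bbar))))}"

definition resid :: "real^'n^'m \<Rightarrow> real^'m \<Rightarrow> real^'n \<Rightarrow> real" where
  "resid A b x = infnorm (\<chi> t. max (A $ t \<bullet> x - b $ t) 0)"

text \<open>The supremum in the formula, for a given delta (quotients use 0/0 = 0,
  which agrees with Isabelle's x/0 = 0; the numerator is finite since F(Abar,bbar) is nonempty).\<close>
definition sup_delta :: "(real^'n \<Rightarrow> real) \<Rightarrow> real^'n^'m \<Rightarrow> real^'m \<Rightarrow> real \<Rightarrow> ereal" where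
  "sup_delta N A b \<delta> = Sup {ereal ((N x + 1) * real_of_ereal (distN N x (feas A b)) / resid A b x) | x.
       resid A b x \<le> \<delta> * (N x + 1)}"

end

theory Submission imports Defs begin

lemma nN:
  fixes N :: "real^'n \<Rightarrow> real"
  assumes "is_norm N"
  shows "N 0 = 0" "N (-x) = N x" "N x \<ge> 0" "N (c *\<^sub>R x) = \<bar>c\<bar> * N x" "N (x+y) \<le> N x + N y"
proof -
  have sc: "\<And>c x. N (c *\<^sub>R x) = \<bar>c\<bar> * N x" and tr: "\<And>x y. N (x+y) \<le> N x + N y"
    using assms unfolding is_norm_def by auto
  show 0: "N 0 = 0" using sc[of 0 0] by simp
  show m: "N (-x) = N x" using sc[of "-1" x] by simp
  show "N x \<ge> 0" using tr[of x "-x"] 0 m by simp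
  show "N (c *\<^sub>R x) = \<bar>c\<bar> * N x" by (rule sc)
  show "N (x+y) \<le> N x + N y" by (rule tr)
qed

lemma N_sum:
  fixes N :: "real^'n \<Rightarrow> real"
  assumes "is_norm N" "finite S"
  shows "N (sum f S) \<le> (\<Sum>i\<in>S. N (f i))"
  using assms(2)
proof (induction S rule: finite_induct)
  case empty then show ?case using nN[OF assms(1)] by simp
next
  case (insert a S)
  then show ?case using nN(5)[OF assms(1), of "f a" "sum f S"] by simp
qed

lemma N_upper:
  fixes N :: "real^'n \<Rightarrow> real"
  assumes "is_norm N"
  shows "\<exists>M\<ge>0. \<forall>x. N x \<le> M * norm x"
proof -
  define M where "M = (\<Sum>i\<in>UNIV. N (axis i (1::real) :: real^'n))"
  have "M \<ge> 0" unfolding M_def using nN(3)[OF assms] by (simp add: sum_nonneg)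
  moreover have "N x \<le> M * norm x" for x :: "real^'n"
  proof -
    have "x = (\<Sum>i\<in>UNIV. x$i *\<^sub>R axis i 1)"
      using basis_expansion[of x] by (simp add: scalar_mult_eq_scaleR)
    then have "N x \<le> (\<Sum>i\<in>UNIV. N (x$i *\<^sub>R axis i 1))"
      using N_sum[OF assms, of UNIV "\<lambda>i. x$i *\<^sub>R axis i 1"] by simp
    also have "\<dots> = (\<Sum>i\<in>UNIV. \<bar>x$i\<bar> * N (axis i 1))"
      using nN(4)[OF assms] by simp
    also have "\<dots> \<le> (\<Sum>i\<in>UNIV. norm x * N (axis i 1))"
      by (intro sum_mono mult_right_mono) (auto simp: component_le_norm_cart nN(3)[OF assms])
    also have "\<dots> = M * norm x" unfolding M_def by (simp add: sum_distrib_left mult.commute)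
    finally show ?thesis .
  qed
  ultimately show ?thesis by blast
qed

lemma N_cont:
  fixes N :: "real^'n \<Rightarrow> real"
  assumes "is_norm N"
  shows "continuous_on UNIV N"
proof -
  obtain M where M: "M \<ge> 0" "\<And>x. N x \<le> M * norm x" using N_upper[OF assms] by blast
  have lip: "\<bar>N x - N y\<bar> \<le> M * norm (x - y)" for x y
  proof -
    have "N x \<le> N y + N (x - y)" using nN(5)[OF assms, of y "x-y"] by simp
    moreover have "N y \<le> N x + N (y - x)" using nN(5)[OF assms, of x "y-x"] by simp
    moreover have "N (y - x) = N (x - y)" using nN(2)[OF assms, of "x-y"] by simp
    ultimately show ?thesis using M(2)[of "x-y"] by linarith
  qed
  show ?thesis unfolding continuous_on_iff
  proof (intro ballI allI impI)
    fix x :: "real^'n" and e :: real assume "e > 0"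
    show "\<exists>d>0. \<forall>x'\<in>UNIV. dist x' x < d \<longrightarrow> dist (N x') (N x) < e"
    proof (intro exI[of _ "e/(M+1)"] conjI ballI impI)
      show "e/(M+1) > 0" using \<open>e>0\<close> M by simp
      fix x' assume "dist x' x < e/(M+1)"
      then have "norm (x' - x) * (M+1) < e" using M by (simp add: dist_norm field_simps)
      moreover have "M * norm (x'-x) \<le> norm (x' - x) * (M+1)" using M by (simp add: algebra_simps)
      ultimately show "dist (N x') (N x) < e" using lip[of x' x] by (simp add: dist_real_def)
    qed
  qed
qed

lemma N_lower:
  fixes N :: "real^'n \<Rightarrow> real"
  assumes "is_norm N"
  shows "\<exists>c>0. \<forall>x. c * norm x \<le> N (x::real^'n)"
proof -
  let ?S = "sphere (0::real^'n) 1"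
  have ne: "?S \<noteq> {}"
  proof -
    obtain i :: 'n where True by blast
    have "axis i (1::real) \<in> ?S" by simp
    then show ?thesis by blast
  qed
  obtain x0 where x0: "x0 \<in> ?S" "\<And>y. y \<in> ?S \<Longrightarrow> N x0 \<le> N y"
    using continuous_attains_inf[OF compact_sphere ne continuous_on_subset[OF N_cont[OF assms]]] by blast
  have "x0 \<noteq> 0" using x0(1) by auto
  then have "N x0 \<noteq> 0" using assms unfolding is_norm_def by auto
  then have c: "N x0 > 0" using nN(3)[OF assms, of x0] by simp
  have "N x0 * norm x \<le> N x" for x
  proof (cases "x = 0")
    case True then show ?thesis using nN(3)[OF assms, of x] by simp
  next
    case False
    then have "(1/norm x) *\<^sub>R x \<in> ?S" by simp
    then have "N x0 \<le> N ((1/norm x) *\<^sub>R x)" by (rule x0(2))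
    also have "\<dots> = N x / norm x" using nN(4)[OF assms] by simp
    finally show ?thesis using False by (simp add: field_simps)
  qed
  then show ?thesis using c by blast
qed

lemma dual_bdd:
  fixes N :: "real^'n \<Rightarrow> real"
  assumes "is_norm N"
  shows "bdd_above {\<bar>u \<bullet> x\<bar> | x. N x \<le> 1}"
proof -
  obtain c where c: "c > 0" "\<And>x. c * norm x \<le> N (x::real^'n)" using N_lower[OF assms] by blast
  have "\<bar>u \<bullet> x\<bar> \<le> norm u / c" if "N x \<le> 1" for x
  proof -
    have "norm x \<le> 1/c" using c(2)[of x] that c(1) by (simp add: field_simps)
    then have "\<bar>u \<bullet> x\<bar> \<le> norm u * (1/c)"
      using Cauchy_Schwarz_ineq2[of u x] by (meson mult_left_mono norm_ge_zero order_trans)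
    then show ?thesis by simp
  qed
  then show ?thesis unfolding bdd_above_def by blast
qed

lemma dual_le:
  fixes N :: "real^'n \<Rightarrow> real"
  assumes "is_norm N"
  shows "\<bar>u \<bullet> x\<bar> \<le> dual_norm N u * N x"
proof (cases "x = 0")
  case True
  have "\<bar>u \<bullet> 0\<bar> \<le> dual_norm N u" unfolding dual_norm_def
    by (rule cSup_upper[OF _ dual_bdd[OF assms]]) (use nN(1)[OF assms] in \<open>auto intro!: exI[of _ 0]\<close>)
  then show ?thesis using True nN(1)[OF assms] by simp
next
  case False
  then have Np: "N x > 0" using nN(3)[OF assms, of x] assms unfolding is_norm_def by force
  let ?y = "(1 / N x) *\<^sub>R x"
  have "N ?y = 1" using nN(4)[OF assms] Np by simp
  then have "\<bar>u \<bullet> ?y\<bar> \<le> dual_norm N u" unfolding dual_norm_def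
    by (intro cSup_upper[OF _ dual_bdd[OF assms]]) (rule CollectI, rule exI[of _ ?y], simp)
  then show ?thesis using Np by (simp add: field_simps abs_mult)
qed

lemma dual_vec:
  fixes N :: "real^'n \<Rightarrow> real"
  assumes "is_norm N"
  shows "\<exists>u. u \<bullet> x = N x \<and> (\<forall>y. N y \<le> 1 \<longrightarrow> \<bar>u \<bullet> y\<bar> \<le> 1)"
proof (cases "x = 0")
  case True
  then show ?thesis using nN(1)[OF assms] by (intro exI[of _ 0]) auto
next
  case False
  then have Np: "N x > 0" using nN(3)[OF assms, of x] assms unfolding is_norm_def by force
  define x0 where "x0 = (1 / N x) *\<^sub>R x"
  have N0: "N x0 = 1" using nN(4)[OF assms] Np by (simp add: x0_def)
  have cv: "convex {y. N y < 1}"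
    unfolding convex_def
  proof (intro allI impI ballI, clarify)
    fix a b :: "real^'n" and s t :: real
    assume "N a < 1" "N b < 1" "0 \<le> s" "0 \<le> t" "s + t = 1"
    have "N (s *\<^sub>R a + t *\<^sub>R b) \<le> s * N a + t * N b"
      using nN(5)[OF assms, of "s *\<^sub>R a" "t *\<^sub>R b"] nN(4)[OF assms] \<open>0 \<le> s\<close> \<open>0 \<le> t\<close> by simp
    also have "\<dots> < 1"
    proof (cases "s = 0")
      case True then show ?thesis using \<open>s+t=1\<close> \<open>N b < 1\<close> by simp
    next
      case False
      then have "s * N a < s" using \<open>N a < 1\<close> \<open>0 \<le> s\<close> by simp
      moreover have "t * N b \<le> t" using \<open>N b < 1\<close> \<open>0 \<le> t\<close> by (simp add: mult_left_le)
      ultimately show ?thesis using \<open>s+t=1\<close> by linarith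
    qed
    finally show "N (s *\<^sub>R a + t *\<^sub>R b) < 1" .
  qed
  have "0 \<in> {y. N y < 1}" using nN(1)[OF assms] by simp
  then have "{y. N y < 1} \<noteq> {}" by blast
  moreover have "{y. N y < 1} \<inter> {x0} = {}" using N0 by simp
  ultimately obtain a \<beta> where ab0: "a \<noteq> 0" "\<forall>y\<in>{y. N y < 1}. a \<bullet> y \<le> \<beta>" "\<forall>y\<in>{x0}. a \<bullet> y \<ge> \<beta>"
    using separating_hyperplane_sets[OF cv convex_singleton, of x0] by blast
  then have ab: "a \<noteq> 0" "\<And>y. N y < 1 \<Longrightarrow> a \<bullet> y \<le> \<beta>" "a \<bullet> x0 \<ge> \<beta>" by auto
  have le: "a \<bullet> y \<le> \<beta>" if "N y \<le> 1" for y
  proof (rule field_le_mult_one_interval)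
    fix z :: real assume z: "0 < z" "z < 1"
    have zy: "N (z *\<^sub>R y) < 1"
    proof -
      have "z * N y \<le> z * 1" using that z by (intro mult_left_mono) auto
      then show ?thesis using nN(4)[OF assms, of z y] z by (simp only: abs_of_pos)
    qed
    show "z * (a \<bullet> y) \<le> \<beta>" using ab(2)[OF zy] by simp
  qed
  have abs_le: "\<bar>a \<bullet> y\<bar> \<le> \<beta>" if "N y \<le> 1" for y
    using le[OF that] le[of "-y"] that nN(2)[OF assms, of y] by auto
  have eq: "a \<bullet> x0 = \<beta>" using le[of x0] N0 ab(3) by simp
  have bpos: "\<beta> > 0"
  proof (rule ccontr)
    assume "\<not> \<beta> > 0"
    have Na: "N a > 0" using ab(1) nN(3)[OF assms, of a] assms unfolding is_norm_def by force
    let ?y = "(1 / (2 * N a)) *\<^sub>R a"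
    have "N ?y < 1" using nN(4)[OF assms] Na by simp
    then have "a \<bullet> ?y \<le> \<beta>" by (rule ab(2))
    moreover have "a \<bullet> ?y > 0" using Na ab(1) by simp
    ultimately show False using \<open>\<not> \<beta> > 0\<close> by simp
  qed
  show ?thesis
  proof (intro exI[of _ "(1/\<beta>) *\<^sub>R a"] conjI allI impI)
    have "x = N x *\<^sub>R x0" using Np by (simp add: x0_def)
    then have "a \<bullet> x = N x * \<beta>" using eq by (metis inner_scaleR_right)
    then show "(1/\<beta>) *\<^sub>R a \<bullet> x = N x" using bpos by simp
    fix y assume "N y \<le> 1"
    then show "\<bar>(1/\<beta>) *\<^sub>R a \<bullet> y\<bar> \<le> 1" using abs_le bpos by (simp add: abs_mult field_simps)
  qed
qed

lemma infnorm_le_cart: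
  assumes "\<And>i. \<bar>x$i\<bar> \<le> c" shows "infnorm (x::real^'n) \<le> c"
proof -
  have "\<forall>b\<in>Basis. \<bar>x \<bullet> b\<bar> \<le> c"
  proof
    fix b :: "real^'n" assume "b \<in> Basis"
    then obtain i where "b = axis i 1" unfolding Basis_vec_def by auto
    then show "\<bar>x \<bullet> b\<bar> \<le> c" using assms[of i] by (simp add: cart_eq_inner_axis)
  qed
  then show ?thesis unfolding infnorm_Max by (subst Max_le_iff) auto
qed


lemma distN_fin:
  fixes N :: "real^'n \<Rightarrow> real"
  assumes "is_norm N" "w \<in> \<Omega>"
  shows "distN N x \<Omega> = ereal (real_of_ereal (distN N x \<Omega>))"
    and "real_of_ereal (distN N x \<Omega>) \<ge> 0"
    and "distN N x \<Omega> \<le> ereal (N (x - w))"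
proof -
  show le: "distN N x \<Omega> \<le> ereal (N (x - w))"
    unfolding distN_def using assms(2) by (rule INF_lower)
  have ge: "distN N x \<Omega> \<ge> 0"
    unfolding distN_def using nN(3)[OF assms(1)] by (intro INF_greatest) simp
  show "distN N x \<Omega> = ereal (real_of_ereal (distN N x \<Omega>))"
    using le ge by (cases "distN N x \<Omega>") auto
  show "real_of_ereal (distN N x \<Omega>) \<ge> 0"
    using ge by (simp add: real_of_ereal_pos)
qed

lemma pdist_nonneg: "pdist N p q \<ge> 0"
proof -
  let ?f = "\<lambda>t. max (dual_norm N ((fst p - fst q) $ t)) \<bar>(snd p - snd q) $ t\<bar>"
  have "?f undefined \<le> Max (range ?f)" by (rule Max_ge) auto
  moreover have "?f undefined \<ge> 0" by simp
  ultimately show ?thesis unfolding pdist_def pnorm_def by linarith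
qed

lemma pdist_ge:
  "dual_norm N ((fst p - fst q) $ t) \<le> pdist N p q" "\<bar>(snd p - snd q) $ t\<bar> \<le> pdist N p q"
proof -
  let ?f = "\<lambda>t. max (dual_norm N ((fst p - fst q) $ t)) \<bar>(snd p - snd q) $ t\<bar>"
  have "?f t \<le> Max (range ?f)" by (rule Max_ge) auto
  then show "dual_norm N ((fst p - fst q) $ t) \<le> pdist N p q" "\<bar>(snd p - snd q) $ t\<bar> \<le> pdist N p q"
    unfolding pdist_def pnorm_def by auto
qed

lemma resid_comp: "A $ t \<bullet> x - b $ t \<le> resid A b x"
proof -
  have "\<bar>(\<chi> t. max (A $ t \<bullet> x - b $ t) 0) $ t\<bar> \<le> resid A b x"
    unfolding resid_def by (rule component_le_infnorm_cart)
  then show ?thesis by simp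
qed

lemma part_a:
  fixes N :: "real^'n \<Rightarrow> real" and Abar :: "real^'n^'m" and bbar :: "real^'m"
  assumes nrm: "is_norm N" and ne: "feas Abar bbar \<noteq> {}" and dp: "\<delta> > 0"
  shows "Lipusc_feas N Abar bbar \<le> sup_delta N Abar bbar \<delta>"
proof (cases "sup_delta N Abar bbar \<delta> = \<infinity>")
  case True then show ?thesis by simp
next
  case False
  obtain w where w: "w \<in> feas Abar bbar" using ne by blast
  have r0: "resid Abar bbar w = 0"
  proof -
    have "resid Abar bbar w \<le> 0" unfolding resid_def
      by (rule infnorm_le_cart) (use w in \<open>auto simp: feas_def\<close>)
    then show ?thesis using infnorm_pos_le unfolding resid_def by (metis order_antisym)
  qed
  have "ereal ((N w + 1) * real_of_ereal (distN N w (feas Abar bbar)) / resid Abar bbar w) \<le> sup_delta N Abar bbar \<delta>"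
    unfolding sup_delta_def
    by (rule Sup_upper, rule CollectI, rule exI[of _ w]) (use r0 dp nN(3)[OF nrm, of w] in simp)
  then have S0: "0 \<le> sup_delta N Abar bbar \<delta>" using r0 by (simp add: zero_ereal_def)
  then obtain s where s: "sup_delta N Abar bbar \<delta> = ereal s" using False by (cases "sup_delta N Abar bbar \<delta>") auto
  have s0: "s \<ge> 0" using S0 s by simp
  have mem: "ereal s \<in> {ereal \<kappa> | \<kappa>. \<kappa> \<ge> 0 \<and>
      (\<exists>\<epsilon>>0. \<forall>A b. pdist N (A, b) (Abar, bbar) < \<epsilon> \<longrightarrow>
         (\<forall>x\<in>feas A b. distN N x (feas Abar bbar) \<le> ereal \<kappa> * ereal (pdist N (A, b) (Abar, bbar))))}"
  proof (rule CollectI, rule exI[of _ s], intro conjI refl s0 exI[of _ \<delta>] dp allI impI ballI)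
    fix A b x
    assume pd: "pdist N (A, b) (Abar, bbar) < \<delta>" and x: "x \<in> feas A b"
    define d where "d = pdist N (A, b) (Abar, bbar)"
    define r where "r = resid Abar bbar x"
    define D where "D = real_of_ereal (distN N x (feas Abar bbar))"
    have d0: "d \<ge> 0" unfolding d_def by (rule pdist_nonneg)
    have Nx: "N x \<ge> 0" by (rule nN(3)[OF nrm])
    have DD: "distN N x (feas Abar bbar) = ereal D" "D \<ge> 0"
      using distN_fin[OF nrm w] unfolding D_def by auto
    have rle: "r \<le> d * (N x + 1)"
      unfolding r_def resid_def
    proof (rule infnorm_le_cart)
      fix t
      have "\<bar>(A $ t - Abar $ t) \<bullet> x\<bar> \<le> dual_norm N (A $ t - Abar $ t) * N x" by (rule dual_le[OF nrm])
      also have "\<dots> \<le> d * N x"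
        using pdist_ge(1)[where N=N and p="(A, b)" and q="(Abar, bbar)" and t=t] Nx unfolding d_def by (intro mult_right_mono) auto
      finally have 1: "\<bar>(A $ t - Abar $ t) \<bullet> x\<bar> \<le> d * N x" .
      have 2: "\<bar>b $ t - bbar $ t\<bar> \<le> d"
        using pdist_ge(2)[where N=N and p="(A, b)" and q="(Abar, bbar)" and t=t] unfolding d_def by auto
      have 3: "A $ t \<bullet> x \<le> b $ t" using x unfolding feas_def by auto
      have "Abar $ t \<bullet> x - bbar $ t = (A $ t \<bullet> x - b $ t) - (A $ t - Abar $ t) \<bullet> x + (b $ t - bbar $ t)"
        by (simp add: inner_diff_left)
      then have "Abar $ t \<bullet> x - bbar $ t \<le> d * (N x + 1)" using 1 2 3 by (simp add: algebra_simps)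
      moreover have "0 \<le> d * (N x + 1)" using d0 Nx by simp
      ultimately show "\<bar>(\<chi> t. max (Abar $ t \<bullet> x - bbar $ t) 0) $ t\<bar> \<le> d * (N x + 1)" by simp
    qed
    have r0': "r \<ge> 0" unfolding r_def resid_def by (rule infnorm_pos_le)
    show "distN N x (feas Abar bbar) \<le> ereal s * ereal (pdist N (A, b) (Abar, bbar))"
    proof (cases "r = 0")
      case True
      have "x \<in> feas Abar bbar" unfolding feas_def
        using resid_comp[of Abar _ x bbar] True unfolding r_def by force
      then have "distN N x (feas Abar bbar) \<le> ereal (N (x - x))" by (rule distN_fin[OF nrm])
      then have "distN N x (feas Abar bbar) \<le> 0" using nN(1)[OF nrm] by (simp add: zero_ereal_def)
      also have "0 \<le> ereal s * ereal d" using s0 d0 by simp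
      finally show ?thesis unfolding d_def .
    next
      case False
      then have rp: "r > 0" using r0' by simp
      have "r \<le> \<delta> * (N x + 1)"
        using rle pd Nx unfolding d_def by (smt (verit) mult_right_mono)
      then have "ereal ((N x + 1) * D / r) \<le> sup_delta N Abar bbar \<delta>"
        unfolding sup_delta_def D_def r_def
        by (intro Sup_upper CollectI exI[of _ x]) simp
      then have q: "(N x + 1) * D / r \<le> s" using s by simp
      have "D \<le> s * r / (N x + 1)" using q rp Nx by (simp add: field_simps)
      also have "\<dots> \<le> s * d"
      proof -
        have "s * r \<le> s * (d * (N x + 1))" using rle s0 by (rule mult_left_mono)
        then show ?thesis using Nx by (simp add: field_simps)
      qed
      finally show ?thesis using DD unfolding d_def by simp
    qed
  qed
  show ?thesis unfolding Lipusc_feas_def s by (rule Inf_lower[OF mem])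
qed


lemma part_b:
  fixes N :: "real^'n \<Rightarrow> real" and Abar :: "real^'n^'m" and bbar :: "real^'m"
  assumes nrm: "is_norm N" and ne: "feas Abar bbar \<noteq> {}"
    and k0: "\<kappa> \<ge> 0" and H: "\<forall>A b. pdist N (A, b) (Abar, bbar) < \<epsilon> \<longrightarrow>
         (\<forall>x\<in>feas A b. distN N x (feas Abar bbar) \<le> ereal \<kappa> * ereal (pdist N (A, b) (Abar, bbar)))"
    and dp: "0 < \<delta>" "\<delta> < \<epsilon>"
  shows "sup_delta N Abar bbar \<delta> \<le> ereal \<kappa>"
  unfolding sup_delta_def
proof (rule Sup_least, clarify)
  fix x :: "real^'n"
  assume rx: "resid Abar bbar x \<le> \<delta> * (N x + 1)"
  obtain w where w: "w \<in> feas Abar bbar" using ne by blast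
  define r where "r = resid Abar bbar x"
  define D where "D = real_of_ereal (distN N x (feas Abar bbar))"
  have Nx: "N x \<ge> 0" by (rule nN(3)[OF nrm])
  have DD: "distN N x (feas Abar bbar) = ereal D" "D \<ge> 0"
    using distN_fin[OF nrm w] unfolding D_def by auto
  have r0': "r \<ge> 0" unfolding r_def resid_def by (rule infnorm_pos_le)
  show "ereal ((N x + 1) * real_of_ereal (distN N x (feas Abar bbar)) / resid Abar bbar x) \<le> ereal \<kappa>"
  proof (cases "r = 0")
    case True then show ?thesis using k0 unfolding r_def by simp
  next
    case False
    then have rp: "r > 0" using r0' by simp
    define \<rho> where "\<rho> = r / (N x + 1)"
    have rhop: "\<rho> > 0" using rp Nx unfolding \<rho>_def by simp
    have rhod: "\<rho> \<le> \<delta>" using rx Nx unfolding \<rho>_def r_def by (simp add: field_simps)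
    have rr: "\<rho> * (N x + 1) = r" using Nx unfolding \<rho>_def by simp
    obtain u where u: "u \<bullet> x = N x" "\<And>y. N y \<le> 1 \<Longrightarrow> \<bar>u \<bullet> y\<bar> \<le> 1"
      using dual_vec[OF nrm, of x] by blast
    define A :: "real^'n^'m" where "A = (\<chi> t. Abar $ t - \<rho> *\<^sub>R u)"
    define b :: "real^'m" where "b = (\<chi> t. bbar $ t + \<rho>)"
    define pd where "pd = pdist N (A, b) (Abar, bbar)"
    have dn: "dual_norm N (- (\<rho> *\<^sub>R u)) \<le> \<rho>"
      unfolding dual_norm_def
    proof (rule cSup_least)
      have "\<bar>- (\<rho> *\<^sub>R u) \<bullet> 0\<bar> \<in> {\<bar>- (\<rho> *\<^sub>R u) \<bullet> x\<bar> |x. N x \<le> 1}"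
        using nN(1)[OF nrm] by (intro CollectI exI[of _ 0]) simp
      then show "{\<bar>- (\<rho> *\<^sub>R u) \<bullet> x\<bar> |x. N x \<le> 1} \<noteq> {}" by (metis empty_iff)
    next
      fix z assume "z \<in> {\<bar>- (\<rho> *\<^sub>R u) \<bullet> x\<bar> |x. N x \<le> 1}"
      then obtain y where y: "z = \<bar>- (\<rho> *\<^sub>R u) \<bullet> y\<bar>" "N y \<le> 1" by blast
      have "z = \<rho> * \<bar>u \<bullet> y\<bar>" using y(1) rhop by (simp add: abs_mult)
      also have "\<dots> \<le> \<rho> * 1" using u(2)[OF y(2)] rhop by (intro mult_left_mono) auto
      finally show "z \<le> \<rho>" by simp
    qed
    have pdle: "pd \<le> \<rho>"
      unfolding pd_def pdist_def pnorm_def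
    proof (subst Max_le_iff)
      show "finite (range (\<lambda>t. max (dual_norm N ((fst (A, b) - fst (Abar, bbar)) $ t)) \<bar>(snd (A, b) - snd (Abar, bbar)) $ t\<bar>))" by simp
      show "range (\<lambda>t. max (dual_norm N ((fst (A, b) - fst (Abar, bbar)) $ t)) \<bar>(snd (A, b) - snd (Abar, bbar)) $ t\<bar>) \<noteq> {}" by simp
      have "(A - Abar) $ t = - (\<rho> *\<^sub>R u)" "(b - bbar) $ t = \<rho>" for t unfolding A_def b_def by simp_all
      then show "\<forall>a\<in>range (\<lambda>t. max (dual_norm N ((fst (A, b) - fst (Abar, bbar)) $ t)) \<bar>(snd (A, b) - snd (Abar, bbar)) $ t\<bar>). a \<le> \<rho>"
        using dn rhop by simp
    qed
    have pd0: "pd \<ge> 0" unfolding pd_def by (rule pdist_nonneg)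
    have xF: "x \<in> feas A b"
      unfolding feas_def
    proof (clarify)
      fix t
      have "Abar $ t \<bullet> x - bbar $ t \<le> r" unfolding r_def by (rule resid_comp)
      then show "A $ t \<bullet> x \<le> b $ t"
        using rr u(1) unfolding A_def b_def by (simp add: inner_diff_left algebra_simps)
    qed
    have "distN N x (feas Abar bbar) \<le> ereal \<kappa> * ereal pd"
    proof -
      have "pd < \<epsilon>" using dp rhod pdle by linarith
      then have "pdist N (A, b) (Abar, bbar) < \<epsilon>" unfolding pd_def .
      then show ?thesis using H xF unfolding pd_def by blast
    qed
    then have "D \<le> \<kappa> * pd" using DD by simp
    also have "\<dots> \<le> \<kappa> * \<rho>" using pdle k0 by (rule mult_left_mono)
    finally have "D \<le> \<kappa> * \<rho>" .
    then have "(N x + 1) * D \<le> (N x + 1) * (\<kappa> * \<rho>)" using Nx by (intro mult_left_mono) auto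
    also have "\<dots> = \<kappa> * (\<rho> * (N x + 1))" by (simp add: algebra_simps)
    also have "\<dots> = \<kappa> * r" using rr by simp
    finally have "(N x + 1) * D / r \<le> \<kappa>" using rp by (simp add: field_simps)
    then show ?thesis unfolding D_def r_def by simp
  qed
qed

theorem proposition1:
  fixes N :: "real^'n \<Rightarrow> real" and Abar :: "real^'n^'m" and bbar :: "real^'m"
  assumes "is_norm N"
    and "feas Abar bbar \<noteq> {}"
  shows "((\<lambda>\<delta>. sup_delta N Abar bbar \<delta>) \<longlongrightarrow> Lipusc_feas N Abar bbar) (at_right 0)"
proof (rule order_tendstoI)
  fix a assume "a < Lipusc_feas N Abar bbar"
  then show "\<forall>\<^sub>F \<delta> in at_right 0. a < sup_delta N Abar bbar \<delta>"
    unfolding eventually_at_right_field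
    using part_a[OF assms] by (intro exI[of _ 1]) (auto intro: less_le_trans)
next
  fix a assume "Lipusc_feas N Abar bbar < a"
  then obtain z where z: "z \<in> {ereal \<kappa> | \<kappa>. \<kappa> \<ge> 0 \<and>
      (\<exists>\<epsilon>>0. \<forall>A b. pdist N (A, b) (Abar, bbar) < \<epsilon> \<longrightarrow>
         (\<forall>x\<in>feas A b. distN N x (feas Abar bbar) \<le> ereal \<kappa> * ereal (pdist N (A, b) (Abar, bbar))))}" "z < a"
    unfolding Lipusc_feas_def by (auto simp: Inf_less_iff)
  then obtain \<kappa> \<epsilon> where k: "z = ereal \<kappa>" "\<kappa> \<ge> 0" "\<epsilon> > 0"
    "\<forall>A b. pdist N (A, b) (Abar, bbar) < \<epsilon> \<longrightarrow>
         (\<forall>x\<in>feas A b. distN N x (feas Abar bbar) \<le> ereal \<kappa> * ereal (pdist N (A, b) (Abar, bbar)))"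
    by blast
  show "\<forall>\<^sub>F \<delta> in at_right 0. sup_delta N Abar bbar \<delta> < a"
    unfolding eventually_at_right_field
  proof (intro exI[of _ \<epsilon>] conjI allI impI)
    show "0 < \<epsilon>" by (rule k(3))
    fix \<delta> :: real assume "0 < \<delta>" "\<delta> < \<epsilon>"
    then have "sup_delta N Abar bbar \<delta> \<le> ereal \<kappa>" using part_b[OF assms k(2) k(4)] by blast
    then show "sup_delta N Abar bbar \<delta> < a" using z(2) k(1) by simp
  qed
qed

end
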